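(* Let $n\ge 2$, let $w(A,B)\in\mathbb F_2=\langle A,B\rangle$ be any word and $m=(m_1,\dots,m_{n-1})$ any tuple of integers. Then $\operatorname{Ker}(\Theta_n^{w,m})\le FVP_n\cap FVK_n$.
   Context: For $n\ge 2$, the flat virtual braid group $FVB_n$ is the group with generators $\sigma_1,\dots,\sigma_{n-1},\rho_1,\dots,\rho_{n-1}$ and defining relations: $\sigma_i^2=1$, $\rho_i^2=1$ for $1\le i\le n-1$; $\sigma_i\sigma_{i+1}\sigma_i=\sigma_{i+1}\sigma_i\sigma_{i+1}$, $\rho_i\rho_{i+1}\rho_i=\rho_{i+1}\rho_i\rho_{i+1}$ and $\rho_i\rho_{i+1}\sigma_i=\sigma_{i+1}\rho_i\rho_{i+1}$ for $1\le i\le n-2$; $\sigma_i\sigma_j=\sigma_j\sigma_i$, $\rho_i\rho_j=\rho_j\rho_i$ and $\rho_i\sigma_j=\sigma_j\rho_i$ for $|i-j|\ge 2$. $\mathbb F_{2n}$ is the free group on $x_1,\dots,x_n,y_1,\dots,y_n$; automorphisms compose left to right, $(\varphi\psi)(f)=\psi(\varphi(f))$, and generators not mentioned in the description of an automorphism are fixed. For $w(A,B)\in\mathbb F_2=\langle A,B\rangle$ and $m\in\mathbb Z^{n-1}$, $\Theta_n^{w,m}\colon FVB_n\to\mathrm{Aut}(\mathbb F_{2n})$ is the homomorphism given by $\Theta_n^{w,m}(\sigma_i): x_i\mapsto x_{i+1}a_i,\ x_{i+1}\mapsto x_i a_i^{-1}$, where $a_i=y_{i+1}^{m_2+\dots+m_i}\,w(y_i,y_{i+1})\,y_i^{-(m_1+\dots+m_{i-1})}$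 (empty sums are $0$, so $a_1=w(y_1,y_2)$); $\Theta_n^{w,m}(\rho_i): x_i\mapsto x_{i+1}y_{i+1}^{m_i},\ x_{i+1}\mapsto x_iy_i^{-m_i},\ y_i\mapsto y_{i+1},\ y_{i+1}\mapsto y_i$. Let $S_n=\langle\sigma_1,\dots,\sigma_{n-1}\rangle\le FVB_n$ and $S_n'=\langle\rho_1,\dots,\rho_{n-1}\rangle\le FVB_n$ (each isomorphic to the symmetric group). $\pi_n\colon FVB_n\to S_n$ is the homomorphism with $\pi_n(\sigma_i)=\pi_n(\rho_i)=\sigma_i$, and $FVP_n=\operatorname{Ker}\pi_n$ (flat virtual pure braid group). $\nu_n\colon FVB_n\to S_n'$ is the homomorphism with $\nu_n(\sigma_i)=1$, $\nu_n(\rho_i)=\rho_i$, and $FVK_n=\operatorname{Ker}\nu_n$ (flat virtual kure braid group). *)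

theory Defs
  imports Main
begin

text \<open>Free groups are modelled by words of letters (generator, inverse-flag),
  with True meaning the inverse of the generator; elements of the free group
  are the freely reduced words.\<close>

type_synonym 'g letter = "'g \<times> bool"

definition inv_letter :: "'g letter \<Rightarrow> 'g letter" where
  "inv_letter l = (fst l, \<not> snd l)"

definition inv_word :: "'g letter list \<Rightarrow> 'g letter list" where
  "inv_word xs = rev (map inv_letter xs)"

definition red :: "'g letter list \<Rightarrow> 'g letter list" where
  "red xs = foldr (\<lambda>a acc. case acc of [] \<Rightarrow> [a]
                     | b # rest \<Rightarrow> (if b = inv_letter a then rest else a # acc)) xs []"

definition reduced :: "'g letter list \<Rightarrow> bool" where
  "reduced xs = (\<forall>i. Suc i < length xs \<longrightarrow> xs ! Suc i \<noteq> inv_letter (xs ! i))"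

definition gpow :: "'g \<Rightarrow> int \<Rightarrow> 'g letter list" where
  "gpow g k = (if k \<ge> 0 then replicate (nat k) (g, False) else replicate (nat (- k)) (g, True))"

definition apply_subst :: "('g \<Rightarrow> 'h letter list) \<Rightarrow> 'g letter list \<Rightarrow> 'h letter list" where
  "apply_subst \<phi> ws = red (concat (map (\<lambda>(g, b). if b then inv_word (\<phi> g) else \<phi> g) ws))"

datatype fgen = X nat | Y nat

datatype ab = A | B

datatype fvbgen = Sig nat | Rho nat

definition F2n :: "nat \<Rightarrow> fgen letter list set" where
  "F2n n = {f. reduced f \<and> (\<forall>l\<in>set f. \<exists>i. 1 \<le> i \<and> i \<le> n \<and> (fst l = X i \<or> fst l = Y i))}"

definition valid_gen :: "nat \<Rightarrow> fvbgen \<Rightarrow> bool" where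
  "valid_gen n s = (case s of Sig i \<Rightarrow> 1 \<le> i \<and> i \<le> n - 1 | Rho i \<Rightarrow> 1 \<le> i \<and> i \<le> n - 1)"

definition w_at :: "ab letter list \<Rightarrow> nat \<Rightarrow> fgen letter list" where
  "w_at w i = apply_subst (\<lambda>c. case c of A \<Rightarrow> [(Y i, False)] | B \<Rightarrow> [(Y (Suc i), False)]) w"

definition a_word :: "ab letter list \<Rightarrow> (nat \<Rightarrow> int) \<Rightarrow> nat \<Rightarrow> fgen letter list" where
  "a_word w m i = red (gpow (Y (Suc i)) (\<Sum>k\<in>{2..i}. m k) @ w_at w i
                       @ gpow (Y i) (- (\<Sum>k\<in>{1..<i}. m k)))"

definition theta_gen :: "ab letter list \<Rightarrow> (nat \<Rightarrow> int) \<Rightarrow> fvbgen \<Rightarrow> fgen \<Rightarrow> fgen letter list" where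
  "theta_gen w m s g = (case s of
      Sig i \<Rightarrow> (if g = X i then (X (Suc i), False) # a_word w m i
                else if g = X (Suc i) then (X i, False) # inv_word (a_word w m i)
                else [(g, False)])
    | Rho i \<Rightarrow> (if g = X i then (X (Suc i), False) # gpow (Y (Suc i)) (m i)
                else if g = X (Suc i) then (X i, False) # gpow (Y i) (- m i)
                else if g = Y i then [(Y (Suc i), False)]
                else if g = Y (Suc i) then [(Y i, False)]
                else [(g, False)]))"

text \<open>Theta applied to the element of FVB_n represented by the word s_1 ... s_k,
  evaluated at f; automorphisms compose left to right:
  Theta(s_1 s_2)(f) = Theta(s_2)(Theta(s_1)(f)).\<close>
definition Theta :: "ab letter list \<Rightarrow> (nat \<Rightarrow> int) \<Rightarrow> fvbgen list \<Rightarrow> fgen letter list \<Rightarrow> fgen letter list" where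
  "Theta w m ss f = foldl (\<lambda>h s. apply_subst (theta_gen w m s) h) f ss"

definition tr :: "nat \<Rightarrow> nat \<Rightarrow> nat" where
  "tr i = (\<lambda>k. if k = i then Suc i else if k = Suc i then i else k)"

definition gen_idx :: "fvbgen \<Rightarrow> nat" where
  "gen_idx s = (case s of Sig i \<Rightarrow> i | Rho i \<Rightarrow> i)"

definition pi_perm :: "fvbgen list \<Rightarrow> nat \<Rightarrow> nat" where
  "pi_perm ss = foldl (\<lambda>p s. p \<circ> tr (gen_idx s)) id ss"

text \<open>nu_n: sigma_i \<mapsto> 1, rho_i \<mapsto> rho_i, with S_n' identified with S_n via rho_i \<mapsto> (i i+1).\<close>
definition nu_perm :: "fvbgen list \<Rightarrow> nat \<Rightarrow> nat" where
  "nu_perm ss = foldl (\<lambda>p s. case s of Sig i \<Rightarrow> p | Rho i \<Rightarrow> p \<circ> tr i) id ss"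

end

theory Submission
  imports Defs
begin

definition yonly :: "fgen letter list \<Rightarrow> bool" where
  "yonly ws = (\<forall>l\<in>set ws. \<exists>j. fst l = Y j)"

lemma red_Nil: "red [] = []" by (simp add: red_def)

lemma red_Cons: "red (a#xs) = (case red xs of [] \<Rightarrow> [a]
     | b # rest \<Rightarrow> (if b = inv_letter a then rest else a # red xs))"
  unfolding red_def foldr.simps comp_apply by (rule refl)

lemma red_set: "set (red xs) \<subseteq> set xs"
proof (induction xs)
  case Nil then show ?case by (simp add: red_Nil)
next
  case (Cons a xs)
  then show ?case by (auto simp: red_Cons split: list.splits if_splits)
qed

lemma yonly_red: "yonly xs \<Longrightarrow> yonly (red xs)"
  using red_set unfolding yonly_def by blast

lemma yonly_append[simp]: "yonly (xs @ ys) = (yonly xs \<and> yonly ys)"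
  unfolding yonly_def by auto

lemma yonly_inv: "yonly xs \<Longrightarrow> yonly (inv_word xs)"
  unfolding yonly_def inv_word_def inv_letter_def by auto

lemma yonly_gpow: "yonly (gpow (Y j) k)"
  unfolding yonly_def gpow_def by auto

lemma yonly_concat: "(\<And>x. x \<in> set xs \<Longrightarrow> yonly (f x)) \<Longrightarrow> yonly (concat (map f xs))"
  unfolding yonly_def by fastforce

lemma yonly_ab: "yonly (case c of A \<Rightarrow> [(Y i, False)] | B \<Rightarrow> [(Y (Suc i), False)])"
  by (cases c) (auto simp: yonly_def)

lemma yonly_w_at: "yonly (w_at w i)"
  unfolding w_at_def apply_subst_def
  apply (rule yonly_red, rule yonly_concat)
  apply (auto intro!: yonly_inv yonly_ab)
  done

lemma yonly_a_word: "yonly (a_word w m i)"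
  unfolding a_word_def by (intro yonly_red) (simp add: yonly_gpow yonly_w_at)

lemma theta_Y: "theta_gen w m s (Y j) = [(Y (case s of Sig i \<Rightarrow> j | Rho i \<Rightarrow> tr i j), False)]"
  by (auto simp: theta_gen_def tr_def split: fvbgen.splits)

lemma theta_X: "\<exists>zs. yonly zs \<and> theta_gen w m s (X j) = (X (tr (gen_idx s) j), False) # zs"
  by (auto simp: theta_gen_def tr_def gen_idx_def yonly_a_word yonly_inv yonly_gpow
      split: fvbgen.splits) (auto simp: yonly_def)

lemma apply_Y: "yonly ys \<Longrightarrow> yonly (apply_subst (theta_gen w m s) ys)"
  unfolding apply_subst_def
  apply (rule yonly_red, rule yonly_concat)
  apply (auto simp: yonly_def theta_Y inv_word_def inv_letter_def)
  done

lemma red_X: "yonly R \<Longrightarrow> red ((X j, False) # R) = (X j, False) # red R"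
proof -
  assume R: "yonly R"
  hence "yonly (red R)" by (rule yonly_red)
  thus ?thesis
    by (auto simp: red_Cons yonly_def inv_letter_def split: list.splits)
qed

lemma apply_X: "yonly ys \<Longrightarrow> \<exists>zs. yonly zs \<and>
   apply_subst (theta_gen w m s) ((X j, False) # ys) = (X (tr (gen_idx s) j), False) # zs"
proof -
  assume ys: "yonly ys"
  obtain zs where zs: "yonly zs" "theta_gen w m s (X j) = (X (tr (gen_idx s) j), False) # zs"
    using theta_X by blast
  let ?R = "zs @ concat (map (\<lambda>(g, b). if b then inv_word (theta_gen w m s g) else theta_gen w m s g) ys)"
  have "yonly (concat (map (\<lambda>(g, b). if b then inv_word (theta_gen w m s g) else theta_gen w m s g) ys))"
    using ys by (intro yonly_concat) (auto simp: yonly_def theta_Y inv_word_def inv_letter_def)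
  hence R: "yonly ?R" using zs by simp
  have "apply_subst (theta_gen w m s) ((X j, False) # ys) = red ((X (tr (gen_idx s) j), False) # ?R)"
    unfolding apply_subst_def using zs by simp
  also have "\<dots> = (X (tr (gen_idx s) j), False) # red ?R" using R by (rule red_X)
  finally show ?thesis using yonly_red[OF R] by blast
qed

definition pq :: "fvbgen list \<Rightarrow> nat \<Rightarrow> nat" where
  "pq ss k = foldl (\<lambda>k s. tr (gen_idx s) k) k ss"

definition qq :: "fvbgen list \<Rightarrow> nat \<Rightarrow> nat" where
  "qq ss k = foldl (\<lambda>k s. case s of Sig i \<Rightarrow> k | Rho i \<Rightarrow> tr i k) k ss"

lemma Theta_snoc: "Theta w m (ss @ [s]) f = apply_subst (theta_gen w m s) (Theta w m ss f)"
  by (simp add: Theta_def)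

lemma Theta_X: "\<exists>zs. yonly zs \<and> Theta w m ss [(X k, False)] = (X (pq ss k), False) # zs"
proof (induction ss rule: rev_induct)
  case Nil then show ?case by (auto simp: Theta_def pq_def yonly_def)
next
  case (snoc s ss)
  then obtain zs where "yonly zs" "Theta w m ss [(X k, False)] = (X (pq ss k), False) # zs" by blast
  then show ?case using apply_X[of zs w m s "pq ss k"] by (simp add: Theta_snoc pq_def)
qed

lemma Theta_Y: "Theta w m ss [(Y k, False)] = [(Y (qq ss k), False)]"
proof (induction ss rule: rev_induct)
  case Nil then show ?case by (auto simp: Theta_def qq_def)
next
  case (snoc s ss)
  then show ?case
    by (simp add: Theta_snoc qq_def apply_subst_def theta_Y red_Cons red_Nil split: fvbgen.splits)
qed

lemma tr_tr: "tr i (tr i k) = k" by (simp add: tr_def)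

lemma pi_pq: "pi_perm ss (pq ss k) = k"
proof (induction ss arbitrary: k rule: rev_induct)
  case Nil then show ?case by (simp add: pi_perm_def pq_def)
next
  case (snoc s ss)
  have "pi_perm (ss @ [s]) = pi_perm ss \<circ> tr (gen_idx s)" by (simp add: pi_perm_def)
  moreover have "pq (ss @ [s]) k = tr (gen_idx s) (pq ss k)" by (simp add: pq_def)
  ultimately show ?case using snoc by (simp add: tr_tr)
qed

lemma nu_qq: "nu_perm ss (qq ss k) = k"
proof (induction ss arbitrary: k rule: rev_induct)
  case Nil then show ?case by (simp add: nu_perm_def qq_def)
next
  case (snoc s ss)
  show ?case
  proof (cases s)
    case (Sig i)
    have "nu_perm (ss @ [s]) = nu_perm ss" by (simp add: nu_perm_def Sig)
    moreover have "qq (ss @ [s]) k = qq ss k" by (simp add: qq_def Sig)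
    ultimately show ?thesis using snoc by simp
  next
    case (Rho i)
    have "nu_perm (ss @ [s]) = nu_perm ss \<circ> tr i" by (simp add: nu_perm_def Rho)
    moreover have "qq (ss @ [s]) k = tr i (qq ss k)" by (simp add: qq_def Rho)
    ultimately show ?thesis using snoc by (simp add: tr_tr)
  qed
qed

lemma tr_out: "1 \<le> i \<Longrightarrow> i \<le> n - 1 \<Longrightarrow> n \<ge> 2 \<Longrightarrow> (k = 0 \<or> k > n) \<Longrightarrow> tr i k = k"
  by (auto simp: tr_def)

lemma pq_snoc: "pq (ss @ [s]) k = tr (gen_idx s) (pq ss k)" by (simp add: pq_def)
lemma qq_snoc: "qq (ss @ [s]) k = (case s of Sig i \<Rightarrow> qq ss k | Rho i \<Rightarrow> tr i (qq ss k))" by (cases s) (simp_all add: qq_def)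

lemma pq_out: "n \<ge> 2 \<Longrightarrow> \<forall>s\<in>set ss. valid_gen n s \<Longrightarrow> (k = 0 \<or> k > n) \<Longrightarrow> pq ss k = k"
proof (induction ss rule: rev_induct)
  case Nil then show ?case by (simp add: pq_def)
next
  case (snoc s ss)
  hence h: "pq ss k = k" by simp
  have v: "valid_gen n s" using snoc.prems by simp
  have "tr (gen_idx s) k = k" using v snoc.prems(1,3)
    by (cases s) (auto simp: valid_gen_def gen_idx_def tr_def)
  then show ?case by (simp only: pq_snoc h)
qed

lemma qq_out: "n \<ge> 2 \<Longrightarrow> \<forall>s\<in>set ss. valid_gen n s \<Longrightarrow> (k = 0 \<or> k > n) \<Longrightarrow> qq ss k = k"
proof (induction ss rule: rev_induct)
  case Nil then show ?case by (simp add: qq_def)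
next
  case (snoc s ss)
  hence h: "qq ss k = k" by simp
  have v: "valid_gen n s" using snoc.prems by simp
  have "(case s of Sig i \<Rightarrow> k | Rho i \<Rightarrow> tr i k) = k" using v snoc.prems(1,3)
    by (cases s) (auto simp: valid_gen_def tr_def)
  then show ?case by (simp only: qq_snoc h)
qed

lemma single_F2n: "1 \<le> i \<Longrightarrow> i \<le> n \<Longrightarrow> [(X i, False)] \<in> F2n n \<and> [(Y i, False)] \<in> F2n n"
  by (auto simp: F2n_def reduced_def)

theorem lemma3p1:
  fixes n :: nat and w :: "ab letter list" and m :: "nat \<Rightarrow> int" and g :: "fvbgen list"
  assumes "n \<ge> 2"
    and "\<forall>s\<in>set g. valid_gen n s"
    and "\<forall>f\<in>F2n n. Theta w m g f = f"
  shows "pi_perm g = id \<and> nu_perm g = id"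
proof -
  have pq: "pq g k = k" for k
  proof (cases "1 \<le> k \<and> k \<le> n")
    case True
    obtain zs where "Theta w m g [(X k, False)] = (X (pq g k), False) # zs" using Theta_X by blast
    moreover have "Theta w m g [(X k, False)] = [(X k, False)]" using assms(3) single_F2n[of k n] True by simp
    ultimately show ?thesis by simp
  next
    case False then have "k = 0 \<or> k > n" by arith
    then show ?thesis by (rule pq_out[OF assms(1,2)])
  qed
  have qq: "qq g k = k" for k
  proof (cases "1 \<le> k \<and> k \<le> n")
    case True
    have "Theta w m g [(Y k, False)] = [(Y k, False)]" using assms(3) single_F2n[of k n] True by simp
    then show ?thesis using Theta_Y by simp
  next
    case False then have "k = 0 \<or> k > n" by arith
    then show ?thesis by (rule qq_out[OF assms(1,2)])
  qed
  have "pi_perm g k = k" for k using pi_pq[of g k] pq[of k] by simp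
  moreover have "nu_perm g k = k" for k using nu_qq[of g k] qq[of k] by simp
  ultimately show ?thesis by auto
qed

end
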